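(* Let $M$ be a multiplicity free object of a nonzero finite abelian category $\mathcal C$ over $\mathbb F$ and $\mathscr F$ an increasing semisimple filtration on $M$. If $\sigma\in\mathrm{JH}(M)$ points to $\sigma'\in\mathrm{JH}(M)$, then $d^{\mathscr F}_M(\sigma)>d^{\mathscr F}_M(\sigma')$.
   Context: $\mathcal C$ is an $\mathbb F$-linear abelian category all of whose objects have finite length. An increasing filtration $\mathscr F$ on $M$ is a chain of subobjects $\mathscr F_nM\subseteq\mathscr F_{n+1}M$ ($n\in\mathbb Z$), exhaustive and separated, normalized so that $\mathscr F_nM/\mathscr F_{n-1}M=0$ for $n<0$; it is semisimple if all graded pieces $\mathscr F_nM/\mathscr F_{n-1}M$ are semisimple. For $M$ multiplicity free and $\sigma\in\mathrm{JH}(M)$, $d^{\mathscr F}_M(\sigma)$ is the unique $n$ with $\mathrm{Hom}(\sigma,\mathscr F_nM/\mathscr F_{n-1}M)\neq0$. $\sigma$ points to $\sigma'$ if the subquotient of $M$ which is an extension $0\to\sigma'\to X\to\sigma\to0$ is nonsplit. *)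

theory Defs
  imports Main
begin

text \<open>Concrete model: the ambient abelian category is a category of (left) modules over a
ring; an object M is a carrier set M of an abelian group type with a scalar action act.
Subobjects of M are submodules; a subquotient b/a is a pair of submodules a \<subseteq> b.\<close>

definition module_on :: "('r::ring_1 \<Rightarrow> 'm::ab_group_add \<Rightarrow> 'm) \<Rightarrow> 'm set \<Rightarrow> bool" where
  "module_on act M \<longleftrightarrow> 0 \<in> M \<and> (\<forall>x\<in>M. \<forall>y\<in>M. x + y \<in> M) \<and> (\<forall>x\<in>M. - x \<in> M)
     \<and> (\<forall>r. \<forall>x\<in>M. act r x \<in> M)
     \<and> (\<forall>x\<in>M. act 1 x = x)
     \<and> (\<forall>r s. \<forall>x\<in>M. act (r * s) x = act r (act s x))
     \<and> (\<forall>r s. \<forall>x\<in>M. act (r + s) x = act r x + act s x)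
     \<and> (\<forall>r. \<forall>x\<in>M. \<forall>y\<in>M. act r (x + y) = act r x + act r y)"

definition submod :: "('r::ring_1 \<Rightarrow> 'm::ab_group_add \<Rightarrow> 'm) \<Rightarrow> 'm set \<Rightarrow> 'm set \<Rightarrow> bool" where
  "submod act M N \<longleftrightarrow> N \<subseteq> M \<and> 0 \<in> N \<and> (\<forall>x\<in>N. \<forall>y\<in>N. x + y \<in> N) \<and> (\<forall>x\<in>N. - x \<in> N)
     \<and> (\<forall>r. \<forall>x\<in>N. act r x \<in> N)"

definition ssum :: "'m::ab_group_add set \<Rightarrow> 'm set \<Rightarrow> 'm set" where
  "ssum A B = {x + y | x y. x \<in> A \<and> y \<in> B}"

text \<open>A morphism from the subquotient b/a to the subquotient d/c, represented by a
(set-theoretic) lift g : b \<rightarrow> d, well defined modulo c.\<close>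
definition qhom :: "('r::ring_1 \<Rightarrow> 'm::ab_group_add \<Rightarrow> 'm) \<Rightarrow> 'm set \<Rightarrow> 'm set \<Rightarrow> 'm set \<Rightarrow> 'm set
                     \<Rightarrow> ('m \<Rightarrow> 'm) \<Rightarrow> bool" where
  "qhom act a b c d g \<longleftrightarrow> (\<forall>x\<in>b. g x \<in> d)
     \<and> (\<forall>x\<in>b. \<forall>y\<in>b. g (x + y) - (g x + g y) \<in> c)
     \<and> (\<forall>r. \<forall>x\<in>b. g (act r x) - act r (g x) \<in> c)
     \<and> (\<forall>x\<in>a. g x \<in> c)"

definition sq_iso :: "('r::ring_1 \<Rightarrow> 'm::ab_group_add \<Rightarrow> 'm) \<Rightarrow> 'm set \<Rightarrow> 'm set \<Rightarrow> 'm set \<Rightarrow> 'm set \<Rightarrow> bool" where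
  "sq_iso act a b c d \<longleftrightarrow> (\<exists>g. qhom act a b c d g
     \<and> (\<forall>x\<in>b. g x \<in> c \<longrightarrow> x \<in> a)
     \<and> (\<forall>y\<in>d. \<exists>x\<in>b. y - g x \<in> c))"

definition simple_sq :: "('r::ring_1 \<Rightarrow> 'm::ab_group_add \<Rightarrow> 'm) \<Rightarrow> 'm set \<Rightarrow> 'm set \<Rightarrow> 'm set \<Rightarrow> bool" where
  "simple_sq act M a b \<longleftrightarrow> submod act M a \<and> submod act M b \<and> a \<subset> b
     \<and> (\<forall>c. submod act M c \<and> a \<subseteq> c \<and> c \<subseteq> b \<longrightarrow> c = a \<or> c = b)"

definition semisimple_sq :: "('r::ring_1 \<Rightarrow> 'm::ab_group_add \<Rightarrow> 'm) \<Rightarrow> 'm set \<Rightarrow> 'm set \<Rightarrow> 'm set \<Rightarrow> bool" where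
  "semisimple_sq act M a b \<longleftrightarrow> (\<forall>c. submod act M c \<and> a \<subseteq> c \<and> c \<subseteq> b \<longrightarrow>
     (\<exists>e. submod act M e \<and> a \<subseteq> e \<and> e \<subseteq> b \<and> c \<inter> e = a \<and> ssum c e = b))"

definition comp_series :: "('r::ring_1 \<Rightarrow> 'm::ab_group_add \<Rightarrow> 'm) \<Rightarrow> 'm set \<Rightarrow> (nat \<Rightarrow> 'm set) \<Rightarrow> nat \<Rightarrow> bool" where
  "comp_series act M s k \<longleftrightarrow> s 0 = {0} \<and> s k = M \<and> (\<forall>i<k. simple_sq act M (s i) (s (Suc i)))"

definition finite_length :: "('r::ring_1 \<Rightarrow> 'm::ab_group_add \<Rightarrow> 'm) \<Rightarrow> 'm set \<Rightarrow> bool" where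
  "finite_length act M \<longleftrightarrow> (\<exists>s k. comp_series act M s k)"

definition mult_free :: "('r::ring_1 \<Rightarrow> 'm::ab_group_add \<Rightarrow> 'm) \<Rightarrow> 'm set \<Rightarrow> bool" where
  "mult_free act M \<longleftrightarrow> (\<forall>s k. comp_series act M s k \<longrightarrow>
     (\<forall>i j. i < j \<and> j < k \<longrightarrow> \<not> sq_iso act (s i) (s (Suc i)) (s j) (s (Suc j))))"

definition incr_filtration :: "('r::ring_1 \<Rightarrow> 'm::ab_group_add \<Rightarrow> 'm) \<Rightarrow> 'm set \<Rightarrow> (int \<Rightarrow> 'm set) \<Rightarrow> bool" where
  "incr_filtration act M F \<longleftrightarrow> (\<forall>n. submod act M (F n)) \<and> (\<forall>n. F n \<subseteq> F (n + 1))
     \<and> (\<exists>n. F n = M) \<and> (\<exists>n. F n = {0}) \<and> (\<forall>n<0. F n = F (n - 1))"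

definition semisimple_filtration :: "('r::ring_1 \<Rightarrow> 'm::ab_group_add \<Rightarrow> 'm) \<Rightarrow> 'm set \<Rightarrow> (int \<Rightarrow> 'm set) \<Rightarrow> bool" where
  "semisimple_filtration act M F \<longleftrightarrow> incr_filtration act M F
     \<and> (\<forall>n. semisimple_sq act M (F (n - 1)) (F n))"

text \<open>d^F_M(sigma) for sigma = b/a: the unique n with Hom(sigma, F_n M / F_(n-1) M) nonzero.\<close>
definition dF :: "('r::ring_1 \<Rightarrow> 'm::ab_group_add \<Rightarrow> 'm) \<Rightarrow> (int \<Rightarrow> 'm set) \<Rightarrow> 'm set \<Rightarrow> 'm set \<Rightarrow> int" where
  "dF act F a b = (THE n. \<exists>g. qhom act a b (F (n - 1)) (F n) g \<and> (\<exists>x\<in>b. g x \<notin> F (n - 1)))"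

text \<open>sigma = b/a points to sigma' = b'/a': the subquotient of M which is an extension
0 \<rightarrow> sigma' \<rightarrow> X \<rightarrow> sigma \<rightarrow> 0 is nonsplit.\<close>
definition points_to :: "('r::ring_1 \<Rightarrow> 'm::ab_group_add \<Rightarrow> 'm) \<Rightarrow> 'm set \<Rightarrow> 'm set \<Rightarrow> 'm set \<Rightarrow> 'm set \<Rightarrow> 'm set \<Rightarrow> bool" where
  "points_to act M a b a' b' \<longleftrightarrow> (\<exists>U0 U1 U2. submod act M U0 \<and> submod act M U1 \<and> submod act M U2
     \<and> U0 \<subseteq> U1 \<and> U1 \<subseteq> U2 \<and> sq_iso act U0 U1 a' b' \<and> sq_iso act U1 U2 a b
     \<and> \<not> (\<exists>V. submod act M V \<and> U0 \<subseteq> V \<and> V \<subseteq> U2 \<and> V \<inter> U1 = U0 \<and> ssum V U1 = U2))"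

end

theory Submission
  imports Defs
begin


lemma sm_sub: "submod act M N \<Longrightarrow> N \<subseteq> M" by (simp add: submod_def)
lemma sm_0: "submod act M N \<Longrightarrow> 0 \<in> N" by (simp add: submod_def)
lemma sm_add: "submod act M N \<Longrightarrow> x \<in> N \<Longrightarrow> y \<in> N \<Longrightarrow> x + y \<in> N" by (simp add: submod_def)
lemma sm_neg: "submod act M N \<Longrightarrow> x \<in> N \<Longrightarrow> - x \<in> N" by (simp add: submod_def)
lemma sm_act: "submod act M N \<Longrightarrow> x \<in> N \<Longrightarrow> act r x \<in> N" by (simp add: submod_def)
lemma sm_diff: "submod act M N \<Longrightarrow> x \<in> N \<Longrightarrow> y \<in> N \<Longrightarrow> x - y \<in> N"
  using sm_add[of act M N x "-y"] sm_neg[of act M N y] by simp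
lemma sm_cancel: "submod act M N \<Longrightarrow> x \<in> N \<Longrightarrow> x + y \<in> N \<Longrightarrow> y \<in> N"
  using sm_diff[of act M N "x+y" x] by simp
lemma sm_cancel2: "submod act M N \<Longrightarrow> x \<in> N \<Longrightarrow> y - x \<in> N \<Longrightarrow> y \<in> N"
  using sm_add[of act M N "y - x" x] by simp
lemma sm_cancel3: "submod act M N \<Longrightarrow> x \<in> N \<Longrightarrow> x - y \<in> N \<Longrightarrow> y \<in> N"
  using sm_diff[of act M N x "x - y"] by simp

lemma mod_act0: "module_on act M \<Longrightarrow> act r 0 = 0"
proof -
  assume m: "module_on act M"
  have z: "0 \<in> M" using m by (simp add: module_on_def)
  have "\<forall>r. \<forall>x\<in>M. \<forall>y\<in>M. act r (x + y) = act r x + act r y" using m by (simp add: module_on_def)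
  hence "act r (0 + 0) = act r 0 + act r 0" using z by blast
  thus ?thesis by simp
qed

lemma mod_act_diff: "module_on act M \<Longrightarrow> u \<in> M \<Longrightarrow> v \<in> M \<Longrightarrow> act r (u - v) = act r u - act r v"
proof -
  assume m: "module_on act M" and u: "u \<in> M" and v: "v \<in> M"
  have nv: "- v \<in> M" using m v by (simp add: module_on_def)
  have D: "\<forall>r. \<forall>x\<in>M. \<forall>y\<in>M. act r (x + y) = act r x + act r y" using m by (simp add: module_on_def)
  have "act r (v + - v) = act r v + act r (- v)" using D v nv by blast
  hence "act r (- v) = - act r v" using mod_act0[OF m] by (simp add: eq_neg_iff_add_eq_0 add.commute)
  moreover have "act r (u + - v) = act r u + act r (- v)" using D u nv by blast
  ultimately show ?thesis by simp
qed

lemma mod_act_add: "module_on act M \<Longrightarrow> u \<in> M \<Longrightarrow> v \<in> M \<Longrightarrow> act r (u + v) = act r u + act r v"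
  unfolding module_on_def by blast

lemma submod_M: "module_on act M \<Longrightarrow> submod act M M"
  by (simp add: module_on_def submod_def)
lemma submod_zero: "module_on act M \<Longrightarrow> submod act M {0}"
  using mod_act0[of act M] by (simp add: module_on_def submod_def)
lemma submod_int: "submod act M A \<Longrightarrow> submod act M B \<Longrightarrow> submod act M (A \<inter> B)"
  by (auto simp add: submod_def)

lemma ssum_submod:
  assumes m: "module_on act M" and A: "submod act M A" and B: "submod act M B"
  shows "submod act M (ssum A B)"
proof -
  have AM: "A \<subseteq> M" and BM: "B \<subseteq> M" using A B sm_sub by auto
  have "ssum A B \<subseteq> M"
    using AM BM m by (auto simp: ssum_def module_on_def)
  moreover have "0 \<in> ssum A B" unfolding ssum_def using sm_0[OF A] sm_0[OF B] by force
  moreover have "\<forall>x\<in>ssum A B. \<forall>y\<in>ssum A B. x + y \<in> ssum A B"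
  proof (intro ballI)
    fix x y assume "x \<in> ssum A B" "y \<in> ssum A B"
    then obtain x1 x2 y1 y2 where "x = x1 + x2" "y = y1 + y2" "x1 \<in> A" "y1 \<in> A" "x2 \<in> B" "y2 \<in> B"
      by (auto simp: ssum_def)
    thus "x + y \<in> ssum A B" unfolding ssum_def
      by (intro CollectI exI[of _ "x1 + y1"] exI[of _ "x2 + y2"]) (auto simp: algebra_simps intro: sm_add[OF A] sm_add[OF B])
  qed
  moreover have "\<forall>x\<in>ssum A B. - x \<in> ssum A B"
  proof
    fix x assume "x \<in> ssum A B"
    then obtain x1 x2 where "x = x1 + x2" "x1 \<in> A" "x2 \<in> B" by (auto simp: ssum_def)
    thus "- x \<in> ssum A B" unfolding ssum_def
      by (intro CollectI exI[of _ "- x1"] exI[of _ "- x2"]) (auto simp: algebra_simps intro: sm_neg[OF A] sm_neg[OF B])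
  qed
  moreover have "\<forall>r. \<forall>x\<in>ssum A B. act r x \<in> ssum A B"
  proof (intro allI ballI)
    fix r x assume "x \<in> ssum A B"
    then obtain x1 x2 where "x = x1 + x2" "x1 \<in> A" "x2 \<in> B" by (auto simp: ssum_def)
    moreover have "act r (x1 + x2) = act r x1 + act r x2" using mod_act_add[OF m] AM BM calculation by blast
    ultimately show "act r x \<in> ssum A B" unfolding ssum_def
      using sm_act[OF A] sm_act[OF B] by blast
  qed
  ultimately show ?thesis by (simp add: submod_def)
qed

lemma ssumI: "x \<in> A \<Longrightarrow> y \<in> B \<Longrightarrow> x + y \<in> ssum A B" by (auto simp: ssum_def)
lemma ssumE: "z \<in> ssum A B \<Longrightarrow> (\<And>x y. z = x + y \<Longrightarrow> x \<in> A \<Longrightarrow> y \<in> B \<Longrightarrow> P) \<Longrightarrow> P"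
  by (auto simp: ssum_def)
lemma ssum_left: "0 \<in> B \<Longrightarrow> A \<subseteq> ssum A B" using ssumI[of _ A 0 B] by auto
lemma ssum_right: "0 \<in> A \<Longrightarrow> B \<subseteq> ssum A B" using ssumI[of 0 A _ B] by auto
lemma ssum_least: "submod act M C \<Longrightarrow> A \<subseteq> C \<Longrightarrow> B \<subseteq> C \<Longrightarrow> ssum A B \<subseteq> C"
  by (auto simp: ssum_def intro: sm_add)
lemma ssum_mono: "A \<subseteq> A' \<Longrightarrow> B \<subseteq> B' \<Longrightarrow> ssum A B \<subseteq> ssum A' B'"
  by (auto simp: ssum_def)
lemma ssum_zero: "ssum A {0} = A" by (auto simp: ssum_def)
lemma ssum_absorb: "submod act M B \<Longrightarrow> A \<subseteq> B \<Longrightarrow> 0 \<in> A \<Longrightarrow> ssum A B = B"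
  using ssum_least[of act M B A B] ssum_right[of A B] sm_0[of act M B] by blast

lemma modular:
  assumes C: "submod act M C" and AC: "A \<subseteq> C"
  shows "C \<inter> ssum A B = ssum A (C \<inter> B)"
proof
  show "C \<inter> ssum A B \<subseteq> ssum A (C \<inter> B)"
  proof
    fix z assume z: "z \<in> C \<inter> ssum A B"
    then obtain x y where "z = x + y" "x \<in> A" "y \<in> B" by (auto elim: ssumE)
    moreover have "y \<in> C" using sm_cancel[OF C, of x y] z calculation AC by auto
    ultimately show "z \<in> ssum A (C \<inter> B)" by (auto intro: ssumI)
  qed
  show "ssum A (C \<inter> B) \<subseteq> C \<inter> ssum A B"
    using ssum_least[OF C, of A "C \<inter> B"] AC ssum_mono[of A A "C \<inter> B" B] by auto
qed



lemma zass_step: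
  assumes m: "module_on act M" and ss: "simple_sq act M s s'"
    and A: "submod act M A" and B: "submod act M B" and AB: "A \<subseteq> B"
  shows "ssum A (B \<inter> s) = ssum A (B \<inter> s') \<or> simple_sq act M (ssum A (B \<inter> s)) (ssum A (B \<inter> s'))"
proof -
  define X where "X = ssum A (B \<inter> s)"
  define Y where "Y = ssum A (B \<inter> s')"
  have S: "submod act M s" and S': "submod act M s'" and ss': "s \<subseteq> s'"
    and smax: "\<And>c. submod act M c \<Longrightarrow> s \<subseteq> c \<Longrightarrow> c \<subseteq> s' \<Longrightarrow> c = s \<or> c = s'"
    using ss by (auto simp: simple_sq_def)
  have X: "submod act M X" unfolding X_def by (intro ssum_submod m A submod_int B S)
  have Y: "submod act M Y" unfolding Y_def by (intro ssum_submod m A submod_int B S')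
  have XY: "X \<subseteq> Y" unfolding X_def Y_def using ss' by (intro ssum_mono) auto
  have AX: "A \<subseteq> X" unfolding X_def by (rule ssum_left) (use sm_0[OF B] sm_0[OF S] in auto)
  have YB: "Y \<subseteq> B" unfolding Y_def using ssum_least[OF B, of A "B \<inter> s'"] AB by auto
  have "\<forall>C. submod act M C \<and> X \<subseteq> C \<and> C \<subseteq> Y \<longrightarrow> C = X \<or> C = Y"
  proof (intro allI impI)
    fix C assume "submod act M C \<and> X \<subseteq> C \<and> C \<subseteq> Y"
    hence C: "submod act M C" and XC: "X \<subseteq> C" and CY: "C \<subseteq> Y" by auto
    define D where "D = ssum s (C \<inter> s')"
    have D: "submod act M D" unfolding D_def by (intro ssum_submod m S submod_int C S')
    have sD: "s \<subseteq> D" unfolding D_def by (rule ssum_left) (use sm_0[OF C] sm_0[OF S'] in auto)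
    have Ds: "D \<subseteq> s'" unfolding D_def using ssum_least[OF S', of s "C \<inter> s'"] ss' by auto
    from smax[OF D sD Ds] show "C = X \<or> C = Y"
    proof
      assume Dq: "D = s"
      have "C \<subseteq> X"
      proof
        fix c assume c: "c \<in> C"
        have "c \<in> Y" using c CY by auto
        then obtain a y where cy: "c = a + y" "a \<in> A" "y \<in> B \<inter> s'" unfolding Y_def by (auto elim: ssumE)
        have "y \<in> C" using sm_cancel[OF C, of a y] cy c AX XC by auto
        hence "y \<in> D" unfolding D_def using cy sm_0[OF S] ssumI[of 0 s y "C \<inter> s'"] by auto
        hence "y \<in> B \<inter> s" using Dq cy by auto
        thus "c \<in> X" unfolding X_def using cy ssumI by blast
      qed
      thus ?thesis using XC by auto
    next
      assume Dq: "D = s'"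
      have "Y \<subseteq> C"
      proof
        fix c assume c: "c \<in> Y"
        then obtain a y where cy: "c = a + y" "a \<in> A" "y \<in> B \<inter> s'" unfolding Y_def by (auto elim: ssumE)
        hence "y \<in> D" using Dq by auto
        then obtain u v where uv: "y = u + v" "u \<in> s" "v \<in> C \<inter> s'" unfolding D_def by (auto elim: ssumE)
        have vB: "v \<in> B" using uv CY YB by auto
        have "y - v \<in> B" using sm_diff[OF B] cy vB by auto
        hence "u \<in> B" using uv by simp
        hence "u \<in> X" unfolding X_def using uv(2) sm_0[OF A] ssumI[of 0 A u "B \<inter> s"] by auto
        hence uC: "u \<in> C" using XC by auto
        have "a \<in> C" using cy AX XC by auto
        thus "c \<in> C" using cy uv uC sm_add[OF C] by (metis IntD1 add.assoc)
      qed
      thus ?thesis using CY by auto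
    qed
  qed
  thus ?thesis using X Y XY unfolding X_def[symmetric] Y_def[symmetric] simple_sq_def by auto
qed

lemma chain_exists:
  assumes m: "module_on act M" and cs: "comp_series act M s k"
    and A: "submod act M A" and B: "submod act M B" and AB: "A \<subseteq> B"
  shows "\<exists>xs. xs \<noteq> [] \<and> hd xs = A \<and> last xs = B \<and> successively (simple_sq act M) xs"
proof -
  have "i \<le> k \<Longrightarrow> \<exists>xs. xs \<noteq> [] \<and> hd xs = A \<and> last xs = ssum A (B \<inter> s i) \<and> successively (simple_sq act M) xs" for i
  proof (induction i)
    case 0
    have "s 0 = {0}" using cs by (simp add: comp_series_def)
    hence "ssum A (B \<inter> s 0) = A" using sm_0[OF B] ssum_zero by (metis Int_insert_right_if1 inf_bot_right)
    thus ?case by (intro exI[of _ "[A]"]) auto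
  next
    case (Suc i)
    then obtain xs where xs: "xs \<noteq> []" "hd xs = A" "last xs = ssum A (B \<inter> s i)" "successively (simple_sq act M) xs" by auto
    have "simple_sq act M (s i) (s (Suc i))" using cs Suc.prems by (simp add: comp_series_def)
    from zass_step[OF m this A B AB] show ?case
    proof
      assume "ssum A (B \<inter> s i) = ssum A (B \<inter> s (Suc i))" thus ?case using xs by metis
    next
      assume "simple_sq act M (ssum A (B \<inter> s i)) (ssum A (B \<inter> s (Suc i)))"
      thus ?case using xs by (intro exI[of _ "xs @ [ssum A (B \<inter> s (Suc i))]"]) (auto simp: successively_append_iff)
    qed
  qed
  from this[of k] obtain xs where xs: "xs \<noteq> []" "hd xs = A" "last xs = ssum A (B \<inter> s k)" "successively (simple_sq act M) xs" by auto
  have "B \<inter> s k = B" using cs sm_sub[OF B] by (auto simp: comp_series_def)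
  hence "ssum A (B \<inter> s k) = B" using ssum_absorb[OF B AB sm_0[OF A]] by simp
  thus ?thesis using xs by auto
qed

lemma chain_mf:
  assumes mf: "mult_free act M" and xs: "xs \<noteq> []" "hd xs = {0}" "last xs = M" "successively (simple_sq act M) xs"
    and ij: "i < j" "Suc j < length xs"
  shows "\<not> sq_iso act (xs ! i) (xs ! Suc i) (xs ! j) (xs ! Suc j)"
proof -
  have "comp_series act M (\<lambda>i. xs ! i) (length xs - 1)"
    unfolding comp_series_def using xs
    by (auto simp: hd_conv_nth last_conv_nth intro: successively_nth)
  thus ?thesis using mf ij unfolding mult_free_def by auto
qed

lemma two_factors:
  assumes m: "module_on act M" and fl: "finite_length act M" and mf: "mult_free act M"
    and s1: "simple_sq act M P1 Q1" and s2: "simple_sq act M P2 Q2" and QP: "Q1 \<subseteq> P2"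
  shows "\<not> sq_iso act P1 Q1 P2 Q2"
proof -
  obtain s k where cs: "comp_series act M s k" using fl by (auto simp: finite_length_def)
  have P1: "submod act M P1" and Q1: "submod act M Q1" and P2: "submod act M P2" and Q2: "submod act M Q2"
    using s1 s2 by (auto simp: simple_sq_def)
  have Q2M: "Q2 \<subseteq> M" using sm_sub[OF Q2] .
  have P10: "{0} \<subseteq> P1" using sm_0[OF P1] by auto
  obtain c1 where c1: "c1 \<noteq> []" "hd c1 = {0}" "last c1 = P1" "successively (simple_sq act M) c1"
    using chain_exists[OF m cs submod_zero[OF m] P1 P10] by auto
  obtain c2 where c2: "c2 \<noteq> []" "hd c2 = Q1" "last c2 = P2" "successively (simple_sq act M) c2"
    using chain_exists[OF m cs Q1 P2 QP] by auto
  obtain c3 where c3: "c3 \<noteq> []" "hd c3 = Q2" "last c3 = M" "successively (simple_sq act M) c3"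
    using chain_exists[OF m cs Q2 submod_M[OF m] Q2M] by auto
  define xs where "xs = c1 @ c2 @ c3"
  have xsp: "xs \<noteq> []" "hd xs = {0}" "last xs = M" "successively (simple_sq act M) xs"
    unfolding xs_def using c1 c2 c3 s1 s2 by (auto simp: successively_append_iff)
  define i where "i = length c1 - 1"
  define j where "j = length c1 + length c2 - 1"
  have l1: "length c1 > 0" "length c2 > 0" "length c3 > 0" using c1 c2 c3 by auto
  have "xs ! i = P1" unfolding xs_def i_def using l1 c1 by (simp add: nth_append last_conv_nth)
  moreover have "xs ! Suc i = Q1" unfolding xs_def i_def using l1 c2 by (simp add: nth_append hd_conv_nth)
  moreover have "xs ! j = P2"
  proof -
    have "j = length c1 + (length c2 - 1)" "\<not> j < length c1" unfolding j_def using l1(2) by linarith+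
    hence "xs ! j = (c2 @ c3) ! (length c2 - 1)" unfolding xs_def by (simp add: nth_append)
    also have "\<dots> = c2 ! (length c2 - 1)" using l1 by (simp add: nth_append)
    finally show ?thesis using c2 by (simp add: last_conv_nth)
  qed
  moreover have "xs ! Suc j = Q2" unfolding xs_def j_def using l1 c3
    by (simp add: nth_append hd_conv_nth)
  moreover have "i < j" unfolding i_def j_def using l1(1,2) by linarith
  moreover have "Suc j < length xs" unfolding j_def xs_def using l1 by simp
  ultimately show ?thesis using chain_mf[OF mf xsp] by metis
qed



lemma qh_in: "qhom act a b c d g \<Longrightarrow> x \<in> b \<Longrightarrow> g x \<in> d" by (simp add: qhom_def)
lemma qh_add: "qhom act a b c d g \<Longrightarrow> x \<in> b \<Longrightarrow> y \<in> b \<Longrightarrow> g (x + y) - (g x + g y) \<in> c" by (simp add: qhom_def)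
lemma qh_act: "qhom act a b c d g \<Longrightarrow> x \<in> b \<Longrightarrow> g (act r x) - act r (g x) \<in> c" by (simp add: qhom_def)
lemma qh_a: "qhom act a b c d g \<Longrightarrow> x \<in> a \<Longrightarrow> g x \<in> c" by (simp add: qhom_def)

lemma qh_cong:
  assumes q: "qhom act a b c d g" and B: "submod act M b" and C: "submod act M c" and ab: "a \<subseteq> b"
    and u: "u \<in> b" and v: "v \<in> b" and uv: "u - v \<in> a"
  shows "g u - g v \<in> c"
proof -
  have "u - v \<in> b" using uv ab by auto
  hence "g (v + (u - v)) - (g v + g (u - v)) \<in> c" using qh_add[OF q v] by blast
  hence 1: "g u - g v - g (u - v) \<in> c" by (simp add: algebra_simps)
  have "g (u - v) \<in> c" using qh_a[OF q uv] .
  from sm_add[OF C 1 this] show ?thesis by simp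
qed

lemma qh_neg:
  assumes q: "qhom act a b c d g" and A: "submod act M a" and B: "submod act M b" and C: "submod act M c"
    and x: "x \<in> b"
  shows "g (- x) + g x \<in> c"
proof -
  have "- x \<in> b" using sm_neg[OF B x] .
  hence "g (x + - x) - (g x + g (- x)) \<in> c" using qh_add[OF q x] by blast
  hence "g 0 - (g x + g (- x)) \<in> c" by simp
  moreover have "g 0 \<in> c" using qh_a[OF q sm_0[OF A]] .
  ultimately have "g x + g (- x) \<in> c" using sm_cancel3[OF C] by blast
  thus ?thesis by (simp add: add.commute)
qed

lemma qh_diff:
  assumes q: "qhom act a b c d g" and A: "submod act M a" and B: "submod act M b" and C: "submod act M c"
    and x: "x \<in> b" and y: "y \<in> b"
  shows "g (x - y) - (g x - g y) \<in> c"
proof -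
  have xy: "x - y \<in> b" using sm_diff[OF B x y] .
  have "g ((x - y) + y) - (g (x - y) + g y) \<in> c" using qh_add[OF q xy y] .
  hence "- (g ((x - y) + y) - (g (x - y) + g y)) \<in> c" using sm_neg[OF C] by blast
  thus ?thesis by (simp add: algebra_simps)
qed

lemma qh_comp:
  assumes h: "qhom act A B a b h" and g: "qhom act a b c d g"
    and a: "submod act M a" and b: "submod act M b" and c: "submod act M c" and ab: "a \<subseteq> b"
    and BB: "submod act M B"
  shows "qhom act A B c d (g \<circ> h)"
  unfolding qhom_def
proof (intro conjI ballI allI)
  fix x assume x: "x \<in> B"
  show "(g \<circ> h) x \<in> d" using qh_in[OF g qh_in[OF h x]] by simp
next
  fix x y assume x: "x \<in> B" and y: "y \<in> B"
  have hx: "h x \<in> b" "h y \<in> b" "h (x + y) \<in> b" using qh_in[OF h] x y sm_add[OF BB x y] by auto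
  have "hx + hy \<in> b" if "hx = h x" "hy = h y" for hx hy using sm_add[OF b] hx that by auto
  hence hxy: "h x + h y \<in> b" by simp
  have 1: "g (h (x + y)) - g (h x + h y) \<in> c"
    using qh_cong[OF g b c ab hx(3) hxy] qh_add[OF h x y] by simp
  have 2: "g (h x + h y) - (g (h x) + g (h y)) \<in> c" using qh_add[OF g hx(1,2)] .
  show "(g \<circ> h) (x + y) - ((g \<circ> h) x + (g \<circ> h) y) \<in> c"
    using sm_add[OF c 1 2] by (simp add: algebra_simps)
next
  fix r x assume x: "x \<in> B"
  have hx: "h x \<in> b" "h (act r x) \<in> b" using qh_in[OF h] x sm_act[OF BB x] by auto
  have ahx: "act r (h x) \<in> b" using sm_act[OF b hx(1)] .
  have 1: "g (h (act r x)) - g (act r (h x)) \<in> c"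
    using qh_cong[OF g b c ab hx(2) ahx] qh_act[OF h x] by simp
  have 2: "g (act r (h x)) - act r (g (h x)) \<in> c" using qh_act[OF g hx(1)] .
  show "(g \<circ> h) (act r x) - act r ((g \<circ> h) x) \<in> c"
    using sm_add[OF c 1 2] by simp
next
  fix x assume "x \<in> A"
  thus "(g \<circ> h) x \<in> c" using qh_a[OF g qh_a[OF h]] by simp
qed

lemma iso_trans:
  assumes i1: "sq_iso act A B a b" and i2: "sq_iso act a b c d"
    and a: "submod act M a" and b: "submod act M b" and c: "submod act M c" and ab: "a \<subseteq> b"
    and BB: "submod act M B"
  shows "sq_iso act A B c d"
proof -
  obtain h where h: "qhom act A B a b h" "\<forall>x\<in>B. h x \<in> a \<longrightarrow> x \<in> A" "\<forall>y\<in>b. \<exists>x\<in>B. y - h x \<in> a"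
    using i1 by (auto simp: sq_iso_def)
  obtain g where g: "qhom act a b c d g" "\<forall>x\<in>b. g x \<in> c \<longrightarrow> x \<in> a" "\<forall>y\<in>d. \<exists>x\<in>b. y - g x \<in> c"
    using i2 by (auto simp: sq_iso_def)
  have "qhom act A B c d (g \<circ> h)" by (rule qh_comp[OF h(1) g(1) a b c ab BB])
  moreover have "\<forall>x\<in>B. (g \<circ> h) x \<in> c \<longrightarrow> x \<in> A" using h g qh_in[OF h(1)] by auto
  moreover have "\<forall>y\<in>d. \<exists>x\<in>B. y - (g \<circ> h) x \<in> c"
  proof
    fix y assume "y \<in> d"
    then obtain z where z: "z \<in> b" "y - g z \<in> c" using g(3) by auto
    then obtain x where x: "x \<in> B" "z - h x \<in> a" using h(3) by auto
    have "g z - g (h x) \<in> c" using qh_cong[OF g(1) b c ab z(1) qh_in[OF h(1) x(1)] x(2)] .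
    from sm_add[OF c z(2) this] x(1) show "\<exists>x\<in>B. y - (g \<circ> h) x \<in> c" by auto
  qed
  ultimately show ?thesis by (auto simp: sq_iso_def)
qed

lemma iso_nonzero:
  assumes i1: "sq_iso act A B a b" and g: "qhom act a b c d g" and nz: "\<exists>x\<in>b. g x \<notin> c"
    and a: "submod act M a" and b: "submod act M b" and c: "submod act M c" and ab: "a \<subseteq> b"
    and BB: "submod act M B"
  shows "\<exists>g'. qhom act A B c d g' \<and> (\<exists>x\<in>B. g' x \<notin> c)"
proof -
  obtain h where hh: "qhom act A B a b h" "\<forall>y\<in>b. \<exists>x\<in>B. y - h x \<in> a"
    using i1 by (auto simp: sq_iso_def)
  have "qhom act A B c d (g \<circ> h)" by (rule qh_comp[OF hh(1) g a b c ab BB])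
  moreover obtain z where z: "z \<in> b" "g z \<notin> c" using nz by auto
  then obtain x where x: "x \<in> B" "z - h x \<in> a" using hh(2) by auto
  have "g z - g (h x) \<in> c" using qh_cong[OF g b c ab z(1) qh_in[OF hh(1) x(1)] x(2)] .
  hence "g (h x) \<notin> c" using z(2) sm_cancel2[OF c] by blast
  ultimately show ?thesis using x by (intro exI[of _ "g \<circ> h"]) auto
qed



lemma iso_sym:
  assumes m: "module_on act M" and iso: "sq_iso act A B C D"
    and A: "submod act M A" and B: "submod act M B" and C: "submod act M C" and D: "submod act M D"
    and AB: "A \<subseteq> B" and CD: "C \<subseteq> D"
  shows "sq_iso act C D A B"
proof -
  obtain g where g: "qhom act A B C D g" and inj: "\<forall>x\<in>B. g x \<in> C \<longrightarrow> x \<in> A"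
    and sur: "\<forall>y\<in>D. \<exists>x\<in>B. y - g x \<in> C"
    using iso by (auto simp: sq_iso_def)
  define h where "h y = (SOME x. x \<in> B \<and> y - g x \<in> C)" for y
  have hp: "h y \<in> B \<and> y - g (h y) \<in> C" if "y \<in> D" for y
    unfolding h_def using sur that by (metis (mono_tags, lifting) someI_ex)
  have BM: "B \<subseteq> M" "D \<subseteq> M" using sm_sub B D by auto
  have key: "w \<in> A" if "w \<in> B" "g w \<in> C" for w using inj that by auto
  have gB: "g x \<in> D" if "x \<in> B" for x using qh_in[OF g that] .
  have "qhom act C D A B h" unfolding qhom_def
  proof (intro conjI ballI allI)
    fix y assume "y \<in> D" thus "h y \<in> B" using hp by auto
  next
    fix y1 y2 assume y1: "y1 \<in> D" and y2: "y2 \<in> D"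
    have y12: "y1 + y2 \<in> D" using sm_add[OF D y1 y2] .
    have h1: "h y1 \<in> B" "h y2 \<in> B" "h (y1 + y2) \<in> B" using hp y1 y2 y12 by auto
    have s12: "h y1 + h y2 \<in> B" using sm_add[OF B h1(1,2)] .
    have w: "h (y1 + y2) - (h y1 + h y2) \<in> B" using sm_diff[OF B h1(3) s12] .
    have e1: "g (h (y1 + y2) - (h y1 + h y2)) - (g (h (y1 + y2)) - g (h y1 + h y2)) \<in> C"
      using qh_diff[OF g A B C h1(3) s12] .
    have e2: "g (h y1 + h y2) - (g (h y1) + g (h y2)) \<in> C" using qh_add[OF g h1(1,2)] .
    have e3: "(y1 + y2) - g (h (y1 + y2)) \<in> C" "y1 - g (h y1) \<in> C" "y2 - g (h y2) \<in> C"
      using hp y1 y2 y12 by auto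
    have "g (h (y1 + y2) - (h y1 + h y2)) =
       (g (h (y1 + y2) - (h y1 + h y2)) - (g (h (y1 + y2)) - g (h y1 + h y2)))
       - (g (h y1 + h y2) - (g (h y1) + g (h y2)))
       - ((y1 + y2) - g (h (y1 + y2))) + (y1 - g (h y1)) + (y2 - g (h y2))"
      by (simp add: algebra_simps)
    also have "\<dots> \<in> C" using e1 e2 e3 sm_add[OF C] sm_diff[OF C] by metis
    finally show "h (y1 + y2) - (h y1 + h y2) \<in> A" using key w by blast
  next
    fix r y assume y: "y \<in> D"
    have ay: "act r y \<in> D" using sm_act[OF D y] .
    have h1: "h y \<in> B" "h (act r y) \<in> B" using hp y ay by auto
    have ah: "act r (h y) \<in> B" using sm_act[OF B h1(1)] .
    have w: "h (act r y) - act r (h y) \<in> B" using sm_diff[OF B h1(2) ah] .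
    have e1: "g (h (act r y) - act r (h y)) - (g (h (act r y)) - g (act r (h y))) \<in> C"
      using qh_diff[OF g A B C h1(2) ah] .
    have e2: "g (act r (h y)) - act r (g (h y)) \<in> C" using qh_act[OF g h1(1)] .
    have e3: "act r y - g (h (act r y)) \<in> C" using hp ay by auto
    have "y - g (h y) \<in> C" using hp y by auto
    hence "act r (y - g (h y)) \<in> C" using sm_act[OF C] by blast
    hence e4: "act r y - act r (g (h y)) \<in> C"
      using mod_act_diff[OF m, of y "g (h y)" r] y BM gB[OF h1(1)] by (metis subsetD)
    have "g (h (act r y) - act r (h y)) =
       (g (h (act r y) - act r (h y)) - (g (h (act r y)) - g (act r (h y))))
       - (g (act r (h y)) - act r (g (h y))) - (act r y - g (h (act r y))) + (act r y - act r (g (h y)))"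
      by (simp add: algebra_simps)
    also have "\<dots> \<in> C" using e1 e2 e3 e4 sm_add[OF C] sm_diff[OF C] by metis
    finally show "h (act r y) - act r (h y) \<in> A" using key w by blast
  next
    fix y assume y: "y \<in> C"
    hence yD: "y \<in> D" using CD by auto
    have "g (h y) \<in> C" using hp[OF yD] sm_cancel3[OF C y] by blast
    thus "h y \<in> A" using key hp[OF yD] by blast
  qed
  moreover have "\<forall>y\<in>D. h y \<in> A \<longrightarrow> y \<in> C"
  proof (intro ballI impI)
    fix y assume y: "y \<in> D" and "h y \<in> A"
    hence "g (h y) \<in> C" using qh_a[OF g] by blast
    thus "y \<in> C" using hp[OF y] sm_cancel2[OF C] by blast
  qed
  moreover have "\<forall>x\<in>B. \<exists>y\<in>D. x - h y \<in> A"
  proof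
    fix x assume x: "x \<in> B"
    have gx: "g x \<in> D" using gB x .
    have h1: "h (g x) \<in> B" using hp gx by auto
    have e1: "g (h (g x) - x) - (g (h (g x)) - g x) \<in> C" using qh_diff[OF g A B C h1 x] .
    have e2: "g x - g (h (g x)) \<in> C" using hp gx by auto
    have "g (h (g x) - x) = (g (h (g x) - x) - (g (h (g x)) - g x)) - (g x - g (h (g x)))"
      by (simp add: algebra_simps)
    also have "\<dots> \<in> C" using sm_diff[OF C e1 e2] .
    finally have "h (g x) - x \<in> A" using key sm_diff[OF B h1 x] by blast
    hence "x - h (g x) \<in> A" using sm_neg[OF A] by fastforce
    thus "\<exists>y\<in>D. x - h y \<in> A" using gx by blast
  qed
  ultimately show ?thesis by (auto simp: sq_iso_def)
qed



lemma preimage_submod: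
  assumes g: "qhom act A B C D g" and A: "submod act M A" and B: "submod act M B" and C: "submod act M C"
    and W: "submod act M W" and CW: "C \<subseteq> W" and AB: "A \<subseteq> B"
  shows "submod act M {x\<in>B. g x \<in> W}" "A \<subseteq> {x\<in>B. g x \<in> W}"
proof -
  show "A \<subseteq> {x\<in>B. g x \<in> W}" using AB qh_a[OF g] CW by auto
  have "{x\<in>B. g x \<in> W} \<subseteq> M" using sm_sub[OF B] by auto
  moreover have "0 \<in> {x\<in>B. g x \<in> W}" using sm_0[OF A] AB qh_a[OF g] CW by auto
  moreover have "x + y \<in> {x\<in>B. g x \<in> W}" if "x \<in> {x\<in>B. g x \<in> W}" "y \<in> {x\<in>B. g x \<in> W}" for x y
  proof -
    have xy: "x \<in> B" "y \<in> B" "g x \<in> W" "g y \<in> W" using that by auto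
    have "g (x + y) - (g x + g y) \<in> W" using qh_add[OF g xy(1,2)] CW by auto
    moreover have "g x + g y \<in> W" using sm_add[OF W xy(3,4)] .
    ultimately have "g (x + y) \<in> W" using sm_cancel2[OF W] by blast
    thus ?thesis using sm_add[OF B xy(1,2)] by auto
  qed
  moreover have "- x \<in> {x\<in>B. g x \<in> W}" if "x \<in> {x\<in>B. g x \<in> W}" for x
  proof -
    have xy: "x \<in> B" "g x \<in> W" using that by auto
    have "g (- x) + g x \<in> W" using qh_neg[OF g A B C xy(1)] CW by auto
    hence "g (- x) \<in> W" using sm_diff[OF W _ xy(2)] by fastforce
    thus ?thesis using sm_neg[OF B xy(1)] by auto
  qed
  moreover have "act r x \<in> {x\<in>B. g x \<in> W}" if "x \<in> {x\<in>B. g x \<in> W}" for x r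
  proof -
    have xy: "x \<in> B" "g x \<in> W" using that by auto
    have "g (act r x) - act r (g x) \<in> W" using qh_act[OF g xy(1)] CW by auto
    moreover have "act r (g x) \<in> W" using sm_act[OF W xy(2)] .
    ultimately have "g (act r x) \<in> W" using sm_cancel2[OF W] by blast
    thus ?thesis using sm_act[OF B xy(1)] by auto
  qed
  ultimately show "submod act M {x\<in>B. g x \<in> W}" unfolding submod_def by blast
qed

lemma simple_transfer:
  assumes iso: "sq_iso act A B C D" and s: "simple_sq act M A B"
    and C: "submod act M C" and D: "submod act M D" and CD: "C \<subseteq> D"
  shows "simple_sq act M C D"
proof -
  obtain g where g: "qhom act A B C D g" and inj: "\<forall>x\<in>B. g x \<in> C \<longrightarrow> x \<in> A"
    and sur: "\<forall>y\<in>D. \<exists>x\<in>B. y - g x \<in> C"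
    using iso by (auto simp: sq_iso_def)
  have A: "submod act M A" and B: "submod act M B" and AB: "A \<subset> B"
    and smax: "\<And>c. submod act M c \<Longrightarrow> A \<subseteq> c \<Longrightarrow> c \<subseteq> B \<Longrightarrow> c = A \<or> c = B"
    using s by (auto simp: simple_sq_def)
  obtain x0 where x0: "x0 \<in> B" "x0 \<notin> A" using AB by auto
  have "g x0 \<notin> C" using inj x0 by auto
  moreover have "g x0 \<in> D" using qh_in[OF g x0(1)] .
  ultimately have CD': "C \<subset> D" using CD by auto
  have "W = C \<or> W = D" if W: "submod act M W" and CW: "C \<subseteq> W" and WD: "W \<subseteq> D" for W
  proof -
    define K where "K = {x\<in>B. g x \<in> W}"
    have K: "submod act M K" "A \<subseteq> K" unfolding K_def using preimage_submod[OF g A B C W CW] AB by auto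
    have "K \<subseteq> B" unfolding K_def by auto
    from smax[OF K this] show ?thesis
    proof
      assume KA: "K = A"
      have "W \<subseteq> C"
      proof
        fix w assume w: "w \<in> W"
        then obtain x where x: "x \<in> B" "w - g x \<in> C" using sur WD by auto
        have "g x \<in> W" using sm_cancel3[OF W w] x CW by auto
        hence "x \<in> A" using KA x unfolding K_def by auto
        hence "g x \<in> C" using qh_a[OF g] by auto
        thus "w \<in> C" using sm_cancel2[OF C] x by blast
      qed
      thus ?thesis using CW by auto
    next
      assume KB: "K = B"
      have "D \<subseteq> W"
      proof
        fix w assume w: "w \<in> D"
        then obtain x where x: "x \<in> B" "w - g x \<in> C" using sur by auto
        have "g x \<in> W" using KB x unfolding K_def by auto
        thus "w \<in> W" using sm_cancel2[OF W] x CW by blast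
      qed
      thus ?thesis using WD by auto
    qed
  qed
  thus ?thesis using C D CD' by (auto simp: simple_sq_def)
qed

lemma image_sq:
  assumes m: "module_on act M" and g: "qhom act A B C D g" and nz: "\<exists>x\<in>B. g x \<notin> C"
    and s: "simple_sq act M A B" and C: "submod act M C" and D: "submod act M D" and CD: "C \<subseteq> D"
  shows "\<exists>V. submod act M V \<and> C \<subseteq> V \<and> V \<subseteq> D \<and> sq_iso act A B C V \<and> simple_sq act M C V"
proof -
  have A: "submod act M A" and B: "submod act M B" and AB: "A \<subset> B"
    and smax: "\<And>c. submod act M c \<Longrightarrow> A \<subseteq> c \<Longrightarrow> c \<subseteq> B \<Longrightarrow> c = A \<or> c = B"
    using s by (auto simp: simple_sq_def)
  define K where "K = {x\<in>B. g x \<in> C}"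
  have K: "submod act M K" "A \<subseteq> K" unfolding K_def using preimage_submod[OF g A B C C] AB by auto
  have "K \<noteq> B" using nz unfolding K_def by auto
  hence KA: "K = A" using smax[OF K] unfolding K_def by auto
  define V where "V = {y\<in>D. \<exists>x\<in>B. y - g x \<in> C}"
  have DM: "D \<subseteq> M" using sm_sub[OF D] .
  have gD: "g x \<in> D" if "x \<in> B" for x using qh_in[OF g that] .
  have CV: "C \<subseteq> V" unfolding V_def
  proof
    fix y assume y: "y \<in> C"
    have "y - g 0 \<in> C" using sm_diff[OF C y qh_a[OF g sm_0[OF A]]] .
    thus "y \<in> {y\<in>D. \<exists>x\<in>B. y - g x \<in> C}" using y CD sm_0[OF B] by auto
  qed
  have gV: "g x \<in> V" if "x \<in> B" for x unfolding V_def using gD[OF that] that sm_0[OF C] by force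
  have VD: "V \<subseteq> D" unfolding V_def by auto
  have Vsub: "submod act M V" unfolding submod_def
  proof (intro conjI ballI allI)
    show "V \<subseteq> M" using VD DM by auto
    show "0 \<in> V" using CV sm_0[OF C] by auto
  next
    fix y1 y2 assume "y1 \<in> V" "y2 \<in> V"
    then obtain x1 x2 where h: "y1 \<in> D" "y2 \<in> D" "x1 \<in> B" "x2 \<in> B" "y1 - g x1 \<in> C" "y2 - g x2 \<in> C"
      unfolding V_def by auto
    have e: "g (x1 + x2) - (g x1 + g x2) \<in> C" using qh_add[OF g h(3,4)] .
    have "y1 + y2 - g (x1 + x2) = (y1 - g x1) + (y2 - g x2) - (g (x1 + x2) - (g x1 + g x2))"
      by (simp add: algebra_simps)
    also have "\<dots> \<in> C" using sm_add[OF C h(5,6)] e sm_diff[OF C] by blast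
    finally show "y1 + y2 \<in> V" unfolding V_def using sm_add[OF D h(1,2)] sm_add[OF B h(3,4)] by auto
  next
    fix y assume "y \<in> V"
    then obtain x where h: "y \<in> D" "x \<in> B" "y - g x \<in> C" unfolding V_def by auto
    have e: "g (- x) + g x \<in> C" using qh_neg[OF g A B C h(2)] .
    have "- y - g (- x) = - (y - g x) - (g (- x) + g x)" by (simp add: algebra_simps)
    also have "\<dots> \<in> C" using sm_neg[OF C h(3)] e sm_diff[OF C] by blast
    finally show "- y \<in> V" unfolding V_def using sm_neg[OF D h(1)] sm_neg[OF B h(2)] by auto
  next
    fix r y assume "y \<in> V"
    then obtain x where h: "y \<in> D" "x \<in> B" "y - g x \<in> C" unfolding V_def by auto
    have e: "g (act r x) - act r (g x) \<in> C" using qh_act[OF g h(2)] .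
    have e2: "act r y - act r (g x) \<in> C"
      using sm_act[OF C h(3), of r] mod_act_diff[OF m, of y "g x" r] h DM gD[OF h(2)] by (metis subsetD)
    have "act r y - g (act r x) = (act r y - act r (g x)) - (g (act r x) - act r (g x))" by (simp add: algebra_simps)
    also have "\<dots> \<in> C" using sm_diff[OF C e2 e] .
    finally show "act r y \<in> V" unfolding V_def using sm_act[OF D h(1)] sm_act[OF B h(2)] by auto
  qed
  have gq: "qhom act A B C V g" using g gV unfolding qhom_def by auto
  have iso: "sq_iso act A B C V" unfolding sq_iso_def
    using gq KA unfolding K_def V_def by (intro exI[of _ g]) auto
  have "simple_sq act M C V" using simple_transfer[OF iso s C Vsub CV] .
  thus ?thesis using Vsub CV VD iso by auto
qed



definition degp where
  "degp act F A B n \<longleftrightarrow> (\<exists>g. qhom act A B (F (n - 1)) (F n) g \<and> (\<exists>x\<in>B. g x \<notin> F (n - 1)))"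

lemma F_sub: "semisimple_filtration act M F \<Longrightarrow> submod act M (F n)"
  by (simp add: semisimple_filtration_def incr_filtration_def)
lemma F_ss: "semisimple_filtration act M F \<Longrightarrow> semisimple_sq act M (F (n - 1)) (F n)"
  by (simp add: semisimple_filtration_def)
lemma F_top: "semisimple_filtration act M F \<Longrightarrow> \<exists>n. F n = M"
  by (simp add: semisimple_filtration_def incr_filtration_def)
lemma F_mono: assumes sf: "semisimple_filtration act M F" and ij: "i \<le> j" shows "F i \<subseteq> F j"
proof -
  have st: "F n \<subseteq> F (n + 1)" for n using sf by (simp add: semisimple_filtration_def incr_filtration_def)
  have "F i \<subseteq> F (i + int d)" for d
  proof (induction d)
    case 0 thus ?case by simp
  next
    case (Suc d)
    have "F (i + int d) \<subseteq> F (i + int d + 1)" using st by blast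
    moreover have eq: "i + int (Suc d) = i + int d + 1" by simp
    ultimately show ?case unfolding eq using Suc.IH by blast
  qed
  from this[of "nat (j - i)"] ij show ?thesis by simp
qed
lemma F_bot: assumes sf: "semisimple_filtration act M F" shows "\<exists>n0. \<forall>j\<le>n0. F j = {0}"
proof -
  obtain n0 where n0: "F n0 = {0}" using sf by (auto simp: semisimple_filtration_def incr_filtration_def)
  have "F j = {0}" if "j \<le> n0" for j using F_mono[OF sf that] n0 sm_0[OF F_sub[OF sf]] by blast
  thus ?thesis by blast
qed

lemma boundary:
  assumes sf: "semisimple_filtration act M F" and A: "submod act M A" and B: "submod act M B" and nBA: "\<not> B \<subseteq> A"
  shows "\<exists>k. B \<subseteq> ssum A (F k) \<and> \<not> B \<subseteq> ssum A (F (k - 1))"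
proof (rule ccontr)
  assume H: "\<not> ?thesis"
  obtain n1 where n1: "F n1 = M" using F_top[OF sf] by auto
  obtain n0 where n0: "\<forall>j\<le>n0. F j = {0}" using F_bot[OF sf] by auto
  have "B \<subseteq> ssum A (F n1)" using n1 sm_sub[OF B] ssum_right[of A "F n1"] sm_0[OF A] by auto
  have "B \<subseteq> ssum A (F (n1 - int d))" for d
  proof (induction d)
    case 0 thus ?case using \<open>B \<subseteq> ssum A (F n1)\<close> by simp
  next
    case (Suc d)
    hence "B \<subseteq> ssum A (F (n1 - int d - 1))" using H by blast
    thus ?case by (simp add: algebra_simps)
  qed
  from this[of "nat (n1 - n0)"] have "B \<subseteq> ssum A (F (n1 - int (nat (n1 - n0))))" .
  moreover have "n1 - int (nat (n1 - n0)) \<le> n0" by simp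
  ultimately have "B \<subseteq> ssum A {0}" using n0 by metis
  thus False using nBA ssum_zero by metis
qed

lemma construct:
  assumes m: "module_on act M" and sf: "semisimple_filtration act M F"
    and A: "submod act M A" and B: "submod act M B"
    and k1: "B \<subseteq> ssum A (F k)" and k2: "\<not> B \<subseteq> ssum A (F (k - 1))"
  shows "degp act F A B k"
proof -
  have Fk: "submod act M (F k)" and Fk1: "submod act M (F (k - 1))" using F_sub[OF sf] by auto
  have FF: "F (k - 1) \<subseteq> F k" using F_mono[OF sf] by auto
  define Z where "Z = ssum (F (k - 1)) (A \<inter> F k)"
  have Z: "submod act M Z" unfolding Z_def by (intro ssum_submod m Fk1 submod_int A Fk)
  have FZ: "F (k - 1) \<subseteq> Z" unfolding Z_def by (rule ssum_left) (use sm_0[OF A] sm_0[OF Fk] in auto)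
  have ZF: "Z \<subseteq> F k" unfolding Z_def using ssum_least[OF Fk, of "F (k - 1)" "A \<inter> F k"] FF by auto
  obtain E where E: "submod act M E" "F (k - 1) \<subseteq> E" "E \<subseteq> F k" "Z \<inter> E = F (k - 1)" "ssum Z E = F k"
    using F_ss[OF sf, of k] Z FZ ZF unfolding semisimple_sq_def by blast
  define T where "T = ssum A (F (k - 1))"
  have T: "submod act M T" unfolding T_def by (intro ssum_submod m A Fk1)
  have AT: "A \<subseteq> T" unfolding T_def by (rule ssum_left) (use sm_0[OF Fk1] in auto)
  have FT: "F (k - 1) \<subseteq> T" unfolding T_def by (rule ssum_right) (use sm_0[OF A] in auto)
  have ET: "e \<in> F (k - 1)" if eE: "e \<in> E" and eT: "e \<in> T" for e
  proof -
    obtain a0 f where af: "e = a0 + f" "a0 \<in> A" "f \<in> F (k - 1)" using eT unfolding T_def by (auto elim: ssumE)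
    have "a0 = e - f" using af by simp
    hence "a0 \<in> F k" using sm_diff[OF Fk] eE E(3) af(3) FF by auto
    hence "e \<in> Z" unfolding Z_def using af ssumI[of f "F (k - 1)" a0 "A \<inter> F k"] by (auto simp: add.commute)
    thus ?thesis using E(4) eE by auto
  qed
  define S where "S = ssum A (F k)"
  have ex: "\<exists>e. e \<in> E \<and> x - e \<in> T" if xS: "x \<in> S" for x
  proof -
    obtain a0 y where ay: "x = a0 + y" "a0 \<in> A" "y \<in> F k" using xS unfolding S_def by (auto elim: ssumE)
    have "y \<in> ssum Z E" using ay(3) E(5) by simp
    then obtain z e where ze: "y = z + e" "z \<in> Z" "e \<in> E" by (auto elim: ssumE)
    obtain f a1 where fa: "z = f + a1" "f \<in> F (k - 1)" "a1 \<in> A \<inter> F k" using ze(2) unfolding Z_def by (auto elim: ssumE)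
    have "x - e = (a0 + a1) + f" using ay ze fa by (simp add: algebra_simps)
    also have "\<dots> \<in> T" unfolding T_def using sm_add[OF A ay(2)] fa ssumI by blast
    finally show ?thesis using ze(3) by blast
  qed
  define g where "g x = (SOME e. e \<in> E \<and> x - e \<in> T)" for x
  have gp: "g x \<in> E \<and> x - g x \<in> T" if "x \<in> S" for x
    unfolding g_def using someI_ex[OF ex[OF that]] .
  have uq: "g x - e \<in> F (k - 1)" if "x \<in> S" "e \<in> E" "x - e \<in> T" for x e
  proof -
    have "g x - e \<in> E" using sm_diff[OF E(1)] gp[OF that(1)] that(2) by blast
    moreover have "g x - e = (x - e) - (x - g x)" by simp
    hence "g x - e \<in> T" using sm_diff[OF T] that(3) gp[OF that(1)] by metis
    ultimately show ?thesis using ET by blast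
  qed
  have BS: "B \<subseteq> S" using k1 unfolding S_def .
  have AS: "A \<subseteq> S" unfolding S_def by (rule ssum_left) (use sm_0[OF Fk] in auto)
  have EM: "E \<subseteq> M" "B \<subseteq> M" using sm_sub E(1) B by auto
  have q: "qhom act A B (F (k - 1)) (F k) g" unfolding qhom_def
  proof (intro conjI ballI allI)
    fix x assume "x \<in> B" thus "g x \<in> F k" using gp BS E(3) by blast
  next
    fix x y assume x: "x \<in> B" and y: "y \<in> B"
    have xs: "x \<in> S" "y \<in> S" "x + y \<in> S" using x y sm_add[OF B x y] BS by auto
    have "g x + g y \<in> E" using sm_add[OF E(1)] gp xs by blast
    moreover have "(x + y) - (g x + g y) = (x - g x) + (y - g y)" by simp
    hence "(x + y) - (g x + g y) \<in> T" using sm_add[OF T] gp xs by metis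
    ultimately show "g (x + y) - (g x + g y) \<in> F (k - 1)" using uq xs(3) by blast
  next
    fix r x assume x: "x \<in> B"
    have xs: "x \<in> S" "act r x \<in> S" using x sm_act[OF B x] BS by auto
    have "act r (g x) \<in> E" using sm_act[OF E(1)] gp xs by blast
    moreover have "act r (x - g x) \<in> T" using sm_act[OF T] gp xs by blast
    hence "act r x - act r (g x) \<in> T" using mod_act_diff[OF m, of x "g x" r] x EM gp xs by (metis subsetD)
    ultimately show "g (act r x) - act r (g x) \<in> F (k - 1)" using uq xs(2) by blast
  next
    fix x assume x: "x \<in> A"
    have "g x - 0 \<in> F (k - 1)" using uq[of x 0] x AS AT sm_0[OF E(1)] by auto
    thus "g x \<in> F (k - 1)" by simp
  qed
  have "\<exists>x\<in>B. g x \<notin> F (k - 1)"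
  proof (rule ccontr)
    assume nz: "\<not> ?thesis"
    hence "x \<in> T" if "x \<in> B" for x
    proof -
      have "g x \<in> T" using FT nz that by blast
      moreover have "x - g x \<in> T" using gp BS that by blast
      ultimately show ?thesis using sm_cancel2[OF T] by blast
    qed
    thus False using k2 unfolding T_def by blast
  qed
  thus ?thesis using q unfolding degp_def by blast
qed

lemma deg_unique:
  assumes m: "module_on act M" and fl: "finite_length act M" and mf: "mult_free act M"
    and sf: "semisimple_filtration act M F" and s: "simple_sq act M A B"
    and d1: "degp act F A B n" and d2: "degp act F A B n'"
  shows "n = n'"
proof -
  have A: "submod act M A" and B: "submod act M B" and AB: "A \<subseteq> B" using s by (auto simp: simple_sq_def)
  have V: "\<exists>V. submod act M V \<and> F (j - 1) \<subseteq> V \<and> V \<subseteq> F j \<and> sq_iso act A B (F (j - 1)) V \<and> simple_sq act M (F (j - 1)) V"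
    if dj: "degp act F A B j" for j
  proof -
    obtain g where g: "qhom act A B (F (j - 1)) (F j) g" "\<exists>x\<in>B. g x \<notin> F (j - 1)"
      using dj unfolding degp_def by blast
    show ?thesis by (rule image_sq[OF m g(1) g(2) s F_sub[OF sf] F_sub[OF sf] F_mono[OF sf]]) simp
  qed
  have lt: "False" if di: "degp act F A B i" and dj: "degp act F A B j" and ij: "i < j" for i j
  proof -
    obtain V1 where V1: "submod act M V1" "F (i - 1) \<subseteq> V1" "V1 \<subseteq> F i" "sq_iso act A B (F (i - 1)) V1" "simple_sq act M (F (i - 1)) V1"
      using V[OF di] by blast
    obtain V2 where V2: "submod act M V2" "F (j - 1) \<subseteq> V2" "V2 \<subseteq> F j" "sq_iso act A B (F (j - 1)) V2" "simple_sq act M (F (j - 1)) V2"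
      using V[OF dj] by blast
    have "V1 \<subseteq> F (j - 1)" using V1(3) F_mono[OF sf, of i "j - 1"] ij by auto
    from two_factors[OF m fl mf V1(5) V2(5) this] have ni: "\<not> sq_iso act (F (i - 1)) V1 (F (j - 1)) V2" .
    have "sq_iso act (F (i - 1)) V1 A B"
      by (rule iso_sym[OF m V1(4) A B F_sub[OF sf] V1(1) AB V1(2)])
    from iso_trans[OF this V2(4) A B F_sub[OF sf] AB V1(1)] ni show False by blast
  qed
  show ?thesis using lt[OF d1 d2] lt[OF d2 d1] by (meson linorder_neqE)
qed



lemma ssumE2: "x \<in> X \<Longrightarrow> X \<subseteq> ssum A B \<Longrightarrow> (\<And>a b. x = a + b \<Longrightarrow> a \<in> A \<Longrightarrow> b \<in> B \<Longrightarrow> P) \<Longrightarrow> P"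
  by (auto simp: ssum_def)

lemma deg_transport:
  assumes iso: "sq_iso act A B a b" and d: "degp act F a b n" and sf: "semisimple_filtration act M F"
    and a: "submod act M a" and b: "submod act M b" and ab: "a \<subseteq> b" and BB: "submod act M B"
  shows "degp act F A B n"
proof -
  obtain g where g: "qhom act a b (F (n - 1)) (F n) g" "\<exists>x\<in>b. g x \<notin> F (n - 1)" using d unfolding degp_def by blast
  show ?thesis using iso_nonzero[OF iso g(1) g(2) a b F_sub[OF sf] ab BB] unfolding degp_def .
qed

lemma degree_facts:
  assumes m: "module_on act M" and fl: "finite_length act M" and mf: "mult_free act M"
    and sf: "semisimple_filtration act M F" and s: "simple_sq act M a b"
    and sU: "simple_sq act M U V" and iso: "sq_iso act U V a b"
  shows "V \<subseteq> ssum U (F (dF act F a b)) \<and> \<not> V \<subseteq> ssum U (F (dF act F a b - 1))"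
proof -
  have a: "submod act M a" and b: "submod act M b" and ab: "a \<subset> b" using s by (auto simp: simple_sq_def)
  have U: "submod act M U" and V: "submod act M V" and UV: "U \<subset> V" using sU by (auto simp: simple_sq_def)
  obtain q where q: "b \<subseteq> ssum a (F q)" "\<not> b \<subseteq> ssum a (F (q - 1))"
    using boundary[OF sf a b] ab by auto
  have dq: "degp act F a b q" using construct[OF m sf a b q] .
  have "dF act F a b = (THE n. degp act F a b n)" by (simp add: dF_def degp_def)
  also have "\<dots> = q" using deg_unique[OF m fl mf sf s] dq by (intro the_equality) auto
  finally have dFq: "dF act F a b = q" .
  obtain k where k: "V \<subseteq> ssum U (F k)" "\<not> V \<subseteq> ssum U (F (k - 1))"
    using boundary[OF sf U V] UV by auto
  have dk: "degp act F U V k" using construct[OF m sf U V k] .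
  have "degp act F U V q" using deg_transport[OF iso dq sf a b _ V] ab by auto
  hence "k = q" using deg_unique[OF m fl mf sf sU] dk by blast
  thus ?thesis using k dFq by simp
qed

theorem lemma4p5:
  fixes act :: "'r::ring_1 \<Rightarrow> 'm::ab_group_add \<Rightarrow> 'm"
    and M :: "'m set" and F :: "int \<Rightarrow> 'm set"
    and a b a' b' :: "'m set"
  assumes "module_on act M"
    and "finite_length act M"
    and "mult_free act M"
    and "semisimple_filtration act M F"
    and "simple_sq act M a b"
    and "simple_sq act M a' b'"
    and "points_to act M a b a' b'"
  shows "dF act F a b > dF act F a' b'"
proof -
  note m = assms(1) and fl = assms(2) and mf = assms(3) and sf = assms(4) and s = assms(5) and s' = assms(6)
  obtain U0 U1 U2 where U: "submod act M U0" "submod act M U1" "submod act M U2"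
    "U0 \<subseteq> U1" "U1 \<subseteq> U2" "sq_iso act U0 U1 a' b'" "sq_iso act U1 U2 a b"
    and ns: "\<not> (\<exists>V. submod act M V \<and> U0 \<subseteq> V \<and> V \<subseteq> U2 \<and> V \<inter> U1 = U0 \<and> ssum V U1 = U2)"
    using assms(7) unfolding points_to_def by blast
  have a: "submod act M a" "submod act M b" "a \<subseteq> b" using s by (auto simp: simple_sq_def)
  have a': "submod act M a'" "submod act M b'" "a' \<subseteq> b'" using s' by (auto simp: simple_sq_def)
  have sU01: "simple_sq act M U0 U1"
    using simple_transfer[OF iso_sym[OF m U(6) U(1,2) a'(1,2) U(4) a'(3)] s' U(1,2,4)] .
  have sU12: "simple_sq act M U1 U2"
    using simple_transfer[OF iso_sym[OF m U(7) U(2,3) a(1,2) U(5) a(3)] s U(2,3,5)] .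
  define p where "p = dF act F a' b'"
  define q where "q = dF act F a b"
  have P: "U1 \<subseteq> ssum U0 (F p)" "\<not> U1 \<subseteq> ssum U0 (F (p - 1))"
    using degree_facts[OF m fl mf sf s' sU01 U(6)] unfolding p_def by auto
  have Q: "U2 \<subseteq> ssum U1 (F q)"
    using degree_facts[OF m fl mf sf s sU12 U(7)] unfolding q_def by auto
  show "q > p" unfolding p_def[symmetric] q_def[symmetric]
  proof (rule ccontr)
    assume "\<not> q > p"
    hence qp: "q \<le> p" by simp
    have Fp: "submod act M (F p)" and Fp1: "submod act M (F (p - 1))" using F_sub[OF sf] by auto
    have FF: "F (p - 1) \<subseteq> F p" "F q \<subseteq> F p" using F_mono[OF sf] qp by auto
    have U2p: "U2 \<subseteq> ssum U0 (F p)"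
    proof
      fix x assume "x \<in> U2"
      then obtain u1 f where uf: "x = u1 + f" "u1 \<in> U1" "f \<in> F q" using Q by (rule ssumE2)
      obtain u0 f' where uf': "u1 = u0 + f'" "u0 \<in> U0" "f' \<in> F p" using uf(2) P(1) by (rule ssumE2)
      have "x = u0 + (f' + f)" using uf uf' by (simp add: algebra_simps)
      moreover have "f' + f \<in> F p" using sm_add[OF Fp uf'(3)] uf(3) FF by auto
      ultimately show "x \<in> ssum U0 (F p)" using uf'(2) ssumI by blast
    qed
    define G where "G = ssum U0 (U2 \<inter> F (p - 1))"
    have Gs: "submod act M G" unfolding G_def by (intro ssum_submod m U(1) submod_int U(3) Fp1)
    have U0G: "U0 \<subseteq> G" unfolding G_def by (rule ssum_left) (use sm_0[OF U(3)] sm_0[OF Fp1] in auto)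
    have GU2: "G \<subseteq> U2" unfolding G_def using ssum_least[OF U(3), of U0 "U2 \<inter> F (p - 1)"] U(4,5) by auto
    have GU1: "G \<inter> U1 = U0"
    proof -
      have W: "submod act M (G \<inter> U1)" using submod_int[OF Gs U(2)] .
      have "G \<inter> U1 = U0 \<or> G \<inter> U1 = U1" using sU01 W U0G U(4) unfolding simple_sq_def by blast
      moreover have "G \<inter> U1 \<noteq> U1"
      proof
        assume "G \<inter> U1 = U1"
        hence "U1 \<subseteq> G" by auto
        moreover have "G \<subseteq> ssum U0 (F (p - 1))" unfolding G_def by (rule ssum_mono) auto
        ultimately show False using P(2) by auto
      qed
      ultimately show ?thesis by auto
    qed
    define H where "H = ssum (F (p - 1)) (ssum U1 G \<inter> F p)"
    have U1G: "submod act M (ssum U1 G)" by (intro ssum_submod m U(2) Gs)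
    have U1GU2: "ssum U1 G \<subseteq> U2" using ssum_least[OF U(3), of U1 G] U(5) GU2 by auto
    have Hs: "submod act M H" unfolding H_def by (intro ssum_submod m Fp1 submod_int U1G Fp)
    have FH: "F (p - 1) \<subseteq> H" unfolding H_def by (rule ssum_left) (use sm_0[OF U1G] sm_0[OF Fp] in auto)
    have HF: "H \<subseteq> F p" unfolding H_def using ssum_least[OF Fp, of "F (p - 1)" "ssum U1 G \<inter> F p"] FF by auto
    obtain E where E: "submod act M E" "F (p - 1) \<subseteq> E" "E \<subseteq> F p" "H \<inter> E = F (p - 1)" "ssum H E = F p"
      using F_ss[OF sf, of p] Hs FH HF unfolding semisimple_sq_def by blast
    define V where "V = ssum G (U2 \<inter> E)"
    have Vs: "submod act M V" unfolding V_def by (intro ssum_submod m Gs submod_int U(3) E(1))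
    have GV: "G \<subseteq> V" unfolding V_def by (rule ssum_left) (use sm_0[OF U(3)] sm_0[OF E(1)] in auto)
    have VU2: "V \<subseteq> U2" unfolding V_def using ssum_least[OF U(3), of G "U2 \<inter> E"] GU2 by auto
    have VU1: "V \<inter> U1 = U0"
    proof
      show "U0 \<subseteq> V \<inter> U1" using U0G GV U(4) by auto
      show "V \<inter> U1 \<subseteq> U0"
      proof
        fix v assume v: "v \<in> V \<inter> U1"
        then obtain g0 w where gw: "v = g0 + w" "g0 \<in> G" "w \<in> U2 \<inter> E" unfolding V_def by (auto elim: ssumE)
        have "w = v + (- g0)" using gw by simp
        moreover have "v + (- g0) \<in> ssum U1 G" using v sm_neg[OF Gs gw(2)] ssumI[of v U1 "- g0" G] by auto
        ultimately have "w \<in> ssum U1 G" by simp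
        moreover have "w \<in> F p" using gw E(3) by auto
        ultimately have "w \<in> H" unfolding H_def using sm_0[OF Fp1] ssumI[of 0 "F (p - 1)" w] by auto
        hence "w \<in> F (p - 1)" using E(4) gw by auto
        hence "w \<in> G" unfolding G_def using gw sm_0[OF U(1)] ssumI[of 0 U0 w] by auto
        hence "v \<in> G" using gw sm_add[OF Gs] by auto
        thus "v \<in> U0" using GU1 v by auto
      qed
    qed
    have VU: "ssum V U1 = U2"
    proof
      show "ssum V U1 \<subseteq> U2" using ssum_least[OF U(3) VU2 U(5)] .
      show "U2 \<subseteq> ssum V U1"
      proof
        fix u assume u: "u \<in> U2"
        then obtain u0 y where uy: "u = u0 + y" "u0 \<in> U0" "y \<in> F p" using U2p by (rule ssumE2)
        have yU2: "y \<in> U2" using sm_cancel[OF U(3), of u0 y] uy u U(4,5) by auto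
        have "y \<in> ssum H E" using uy E(5) by simp
        then obtain h e where he: "y = h + e" "h \<in> H" "e \<in> E" by (auto elim: ssumE)
        obtain f h1 where fh: "h = f + h1" "f \<in> F (p - 1)" "h1 \<in> ssum U1 G \<inter> F p" using he(2) unfolding H_def by (auto elim: ssumE)
        have e': "e + f \<in> E" using sm_add[OF E(1) he(3)] fh(2) E(2) by auto
        have "e + f = y - h1" using he fh by (simp add: algebra_simps)
        hence "e + f \<in> U2" using sm_diff[OF U(3) yU2] fh(3) U1GU2 by auto
        hence eV: "e + f \<in> U2 \<inter> E" using e' by auto
        obtain u1 g1 where ug: "h1 = u1 + g1" "u1 \<in> U1" "g1 \<in> G" using fh(3) by (auto elim: ssumE)
        have "u = (g1 + (e + f)) + (u0 + u1)" using uy he fh ug by (simp add: algebra_simps)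
        moreover have "g1 + (e + f) \<in> V" unfolding V_def using ug(3) eV ssumI by blast
        moreover have "u0 + u1 \<in> U1" using sm_add[OF U(2)] uy(2) ug(2) U(4) by auto
        ultimately show "u \<in> ssum V U1" using ssumI by blast
      qed
    qed
    show False using ns Vs U0G GV VU2 VU1 VU by blast
  qed
qed

end
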